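(* Let $1\le k\le n-1$ and let $\Sigma=\mathbb{S}^k\times\mathbb{R}^{n-k}\subset\mathbb{R}^{n+1}$ be a self-shrinker. Let $H\subset\mathbb{R}^{n-k}$ be an open half-space whose boundary is an $(n-k-1)$-dimensional linear subspace (through the origin). Then $\mathbb{S}^k\times H\subset\Sigma$ is unstable, i.e. $L$ has a negative eigenvalue with zero boundary data on it.
   Context: $\mathbb{S}^k$ is the round sphere of radius $\sqrt{2k}$ centered at the origin of $\mathbb{R}^{k+1}$, and $\mathbb{S}^k\times\mathbb{R}^{n-k}\subset\mathbb{R}^{k+1}\times\mathbb{R}^{n-k}$. Stability operator: $Lf=\Delta f-\tfrac12\langle\vec x,\nabla f\rangle+(|A|^2+\tfrac12)f$; eigenvalue convention $Lu=-\lambda u$ with $u\in L^2(e^{-|\vec x|^2/4}d\mu)$. A region is stable if it carries a strictly positive function $u$ with $Lu=0$, and unstable otherwise. *)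

theory Defs
  imports "HOL-Analysis.Analysis"
begin

text \<open>Setting. The factor R^(k+1) is modelled by a euclidean space 'a with DIM('a) = k+1,
the factor R^(n-k) by a euclidean space 'b with DIM('b) = n-k. Points of R^(n+1) are
pairs (x,y) :: 'a \<times> 'b.\<close>

definition cyl_rad :: "'a::euclidean_space itself \<Rightarrow> real" where
  "cyl_rad _ = sqrt (2 * (real DIM('a) - 1))"

definition shrinker_cyl :: "('a::euclidean_space \<times> 'b::euclidean_space) set" where
  "shrinker_cyl = {(x, y). norm x = cyl_rad TYPE('a)}"

text \<open>Squared norm of the second fundamental form of the cylinder: k principal
curvatures equal to 1/sqrt(2k), the others zero.\<close>
definition cyl_Asq :: "'a::euclidean_space itself \<Rightarrow> real" where
  "cyl_Asq t = (real DIM('a) - 1) / (cyl_rad t)\<^sup>2"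

text \<open>Ambient derivatives of this extension compute the
intrinsic ones on the cylinder: its Euclidean Laplacian on the cylinder equals the
Laplace--Beltrami operator of the cylinder, and its ambient gradient there is tangential.\<close>
definition hom_ext :: "('a::euclidean_space \<times> 'b::euclidean_space \<Rightarrow> real)
    \<Rightarrow> 'a \<times> 'b \<Rightarrow> real" where
  "hom_ext u p = u (cyl_rad TYPE('a) *\<^sub>R (fst p /\<^sub>R norm (fst p)), snd p)"

definition pderiv_dir :: "('c::euclidean_space \<Rightarrow> real) \<Rightarrow> 'c \<Rightarrow> 'c \<Rightarrow> real" where
  "pderiv_dir f b p = frechet_derivative f (at p) b"

definition laplacian :: "('c::euclidean_space \<Rightarrow> real) \<Rightarrow> 'c \<Rightarrow> real" where
  "laplacian f p = (\<Sum>b\<in>Basis. pderiv_dir (pderiv_dir f b) b p)"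

definition C2_on :: "'c::euclidean_space set \<Rightarrow> ('c \<Rightarrow> real) \<Rightarrow> bool" where
  "C2_on U f \<longleftrightarrow> f differentiable_on U \<and>
     (\<forall>b\<in>Basis. pderiv_dir f b differentiable_on U \<and>
        (\<forall>c\<in>Basis. continuous_on U (pderiv_dir (pderiv_dir f b) c)))"

definition stab_op :: "('a::euclidean_space \<times> 'b::euclidean_space \<Rightarrow> real)
    \<Rightarrow> 'a \<times> 'b \<Rightarrow> real" where
  "stab_op u p = laplacian (hom_ext u) p
      - 1/2 * frechet_derivative (hom_ext u) (at p) p
      + (cyl_Asq TYPE('a) + 1/2) * u p"

text \<open>Cone over a region of the cylinder (open in R^(n+1) if the region is open in it).\<close>
definition cyl_cone :: "('a::euclidean_space \<times> 'b::euclidean_space) set \<Rightarrow> ('a \<times> 'b) set" where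
  "cyl_cone \<Omega> = {(x, y). x \<noteq> 0 \<and> (cyl_rad TYPE('a) *\<^sub>R (x /\<^sub>R norm x), y) \<in> \<Omega>}"

definition stable_region :: "('a::euclidean_space \<times> 'b::euclidean_space) set \<Rightarrow> bool" where
  "stable_region \<Omega> \<longleftrightarrow> (\<exists>u. C2_on (cyl_cone \<Omega>) (hom_ext u) \<and>
       (\<forall>p\<in>\<Omega>. u p > 0 \<and> stab_op u p = 0))"

end

theory Submission
  imports Defs
begin



lemma dir_deriv:
  fixes f :: "'c::euclidean_space \<Rightarrow> real"
  assumes "f differentiable at (p + s *\<^sub>R b)"
  shows "DERIV (\<lambda>r. f (p + r *\<^sub>R b)) s :> pderiv_dir f b (p + s *\<^sub>R b)"
proof -
  have d: "(f has_derivative frechet_derivative f (at (p + s *\<^sub>R b))) (at (p + s *\<^sub>R b))"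
    using assms frechet_derivative_works by blast
  interpret L: bounded_linear "frechet_derivative f (at (p + s *\<^sub>R b))"
    using d by (rule has_derivative_bounded_linear)
  have "((\<lambda>r. p + r *\<^sub>R b) has_derivative (\<lambda>r. r *\<^sub>R b)) (at s)"
    by (intro derivative_eq_intros) auto
  then have "((\<lambda>r. f (p + r *\<^sub>R b)) has_derivative (\<lambda>k. frechet_derivative f (at (p + s *\<^sub>R b)) (k *\<^sub>R b))) (at s)"
    by (rule has_derivative_compose) (use d in simp)
  then show ?thesis
    unfolding has_field_derivative_def pderiv_dir_def by (simp add: L.scaleR mult_commute_abs)
qed

lemma max_second:
  fixes f :: "'c::euclidean_space \<Rightarrow> real"
  assumes W: "open W" "p \<in> W" and mx: "\<forall>q\<in>W. f q \<le> f p"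
    and df: "\<forall>q\<in>W. f differentiable at q"
    and d2: "pderiv_dir f b differentiable at p"
  shows "pderiv_dir (pderiv_dir f b) b p \<le> 0"
proof (rule ccontr)
  assume "\<not> ?thesis"
  hence Dpos: "pderiv_dir (pderiv_dir f b) b p > 0" by simp
  have "DERIV (\<lambda>r. pderiv_dir f b (p + r *\<^sub>R b)) 0 :> pderiv_dir (pderiv_dir f b) b (p + 0 *\<^sub>R b)"
    by (rule dir_deriv) (use d2 in simp)
  hence "DERIV (\<lambda>r. pderiv_dir f b (p + r *\<^sub>R b)) 0 :> pderiv_dir (pderiv_dir f b) b p" by simp
  from DERIV_pos_inc_right[OF this Dpos] obtain d where d: "d > 0"
    "\<And>h. h > 0 \<Longrightarrow> h < d \<Longrightarrow> pderiv_dir f b (p + 0 *\<^sub>R b) < pderiv_dir f b (p + h *\<^sub>R b)" by auto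
  have z: "frechet_derivative f (at p) = (\<lambda>v. 0)"
    by (rule differential_zero_maxmin[of p W f]) (use df W frechet_derivative_works mx in auto)
  hence psi0: "pderiv_dir f b p = 0" by (simp add: pderiv_dir_def)
  obtain e where e: "e > 0" "ball p e \<subseteq> W" using W openE by blast
  define \<delta> where "\<delta> = min d (e / (norm b + 1)) / 2"
  have dpos: "\<delta> > 0" using d e by (simp add: \<delta>_def) (smt (verit) norm_ge_zero divide_pos_pos)
  have dd: "\<delta> < d" using d e by (simp add: \<delta>_def)
  have inW: "p + s *\<^sub>R b \<in> W" if "0 \<le> s" "s \<le> \<delta>" for s
  proof -
    have "norm (s *\<^sub>R b) = s * norm b" using that by simp
    also have "\<dots> \<le> \<delta> * norm b" using that by (simp add: mult_right_mono)
    also have "\<dots> < e"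
    proof -
      have "\<delta> \<le> e / (norm b + 1) / 2" unfolding \<delta>_def by (intro divide_right_mono) auto
      hence "\<delta> * norm b \<le> e / (norm b + 1) / 2 * norm b" by (rule mult_right_mono) simp
      also have "\<dots> < e"
      proof -
        have nb: "norm b + 1 > 0" by (smt (verit) norm_ge_zero)
        have "e * norm b < e * (2 * (norm b + 1))" using e nb by (intro mult_strict_left_mono) auto
        thus ?thesis using nb by (simp add: field_simps)
      qed
      finally show ?thesis .
    qed
    finally show ?thesis using e(2) by (auto simp: dist_norm)
  qed
  have "\<exists>z>0. z < \<delta> \<and> f (p + \<delta> *\<^sub>R b) - f (p + 0 *\<^sub>R b) = (\<delta> - 0) * pderiv_dir f b (p + z *\<^sub>R b)"
    by (rule MVT2[OF dpos]) (use inW df in \<open>auto intro!: dir_deriv\<close>)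
  then obtain z where zz: "z > 0" "z < \<delta>" "f (p + \<delta> *\<^sub>R b) - f p = \<delta> * pderiv_dir f b (p + z *\<^sub>R b)" by auto
  have "pderiv_dir f b (p + z *\<^sub>R b) > 0" using d(2)[of z] zz dd psi0 by simp
  hence "f (p + \<delta> *\<^sub>R b) > f p" using zz dpos by (smt (verit) mult_pos_pos)
  moreover have "f (p + \<delta> *\<^sub>R b) \<le> f p" using mx inW[of \<delta>] dpos by simp
  ultimately show False by simp
qed




definition gg :: "real \<Rightarrow> real" where "gg s = s * (s - 1/2) * (8 - s)"
definition gg1 :: "real \<Rightarrow> real" where "gg1 s = 17 * s - 3 * s * s - 4"
definition gg2 :: "real \<Rightarrow> real" where "gg2 s = 17 - 6 * s"

lemma gg_deriv: "(gg has_real_derivative gg1 s) (at s)"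
  unfolding gg_def gg1_def by (auto intro!: derivative_eq_intros simp: algebra_simps power2_eq_square)
lemma gg1_deriv: "(gg1 has_real_derivative gg2 s) (at s)"
  unfolding gg1_def gg2_def by (auto intro!: derivative_eq_intros simp: algebra_simps power2_eq_square)

lemma gg_comp:
  fixes f :: "'c::real_normed_vector \<Rightarrow> real"
  assumes "(f has_derivative f') (at q)"
  shows "((\<lambda>x. gg (f x)) has_derivative (\<lambda>h. gg1 (f q) * f' h)) (at q)"
  using has_derivative_compose[OF assms gg_deriv[unfolded has_field_derivative_def]] by (simp add: mult.commute)
lemma gg1_comp:
  fixes f :: "'c::real_normed_vector \<Rightarrow> real"
  assumes "(f has_derivative f') (at q)"
  shows "((\<lambda>x. gg1 (f x)) has_derivative (\<lambda>h. gg2 (f q) * f' h)) (at q)"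
  using has_derivative_compose[OF assms gg1_deriv[unfolded has_field_derivative_def]] by (simp add: mult.commute)

definition Phi :: "'b::euclidean_space \<Rightarrow> real \<Rightarrow> 'b \<Rightarrow> real" where
  "Phi e M y = gg (e \<bullet> y) * (M - y \<bullet> y + (e \<bullet> y)^2)"

definition DPhi :: "'b::euclidean_space \<Rightarrow> real \<Rightarrow> 'b \<Rightarrow> 'b \<Rightarrow> real" where
  "DPhi e M y w = gg1 (e \<bullet> y) * (e \<bullet> w) * (M - y \<bullet> y + (e \<bullet> y)^2)
     + gg (e \<bullet> y) * (- 2 * (y \<bullet> w) + 2 * (e \<bullet> y) * (e \<bullet> w))"

definition D2Phi :: "'b::euclidean_space \<Rightarrow> real \<Rightarrow> 'b \<Rightarrow> 'b \<Rightarrow> 'b \<Rightarrow> real" where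
  "D2Phi e M y w k = gg2 (e \<bullet> y) * (e \<bullet> k) * (e \<bullet> w) * (M - y \<bullet> y + (e \<bullet> y)^2)
     + gg1 (e \<bullet> y) * (e \<bullet> w) * (- 2 * (y \<bullet> k) + 2 * (e \<bullet> y) * (e \<bullet> k))
     + gg1 (e \<bullet> y) * (e \<bullet> k) * (- 2 * (y \<bullet> w) + 2 * (e \<bullet> y) * (e \<bullet> w))
     + gg (e \<bullet> y) * (- 2 * (k \<bullet> w) + 2 * (e \<bullet> k) * (e \<bullet> w))"

lemma Phi_deriv: "((\<lambda>q. Phi e M (snd q)) has_derivative (\<lambda>k. DPhi e M (snd q) (snd k))) (at q)"
  unfolding Phi_def DPhi_def
  apply (rule derivative_eq_intros refl gg_comp | simp)+
  apply (simp add: algebra_simps inner_commute power2_eq_square)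
  done

lemma DPhi_deriv: "((\<lambda>q. DPhi e M (snd q) (snd w)) has_derivative (\<lambda>k. D2Phi e M (snd q) (snd w) (snd k))) (at q)"
  unfolding DPhi_def D2Phi_def
  apply (rule derivative_eq_intros refl gg_comp gg1_comp | simp)+
  apply (simp add: algebra_simps inner_commute power2_eq_square)
  done

lemma pd1: "pderiv_dir (\<lambda>q. Phi e M (snd q)) w q = DPhi e M (snd q) (snd w)"
  unfolding pderiv_dir_def using frechet_derivative_at[OF Phi_deriv] by metis

lemma fd1: "frechet_derivative (\<lambda>q. Phi e M (snd q)) (at q) = (\<lambda>k. DPhi e M (snd q) (snd k))"
  using frechet_derivative_at[OF Phi_deriv] by metis

lemma pd2: "pderiv_dir (pderiv_dir (\<lambda>q. Phi e M (snd q)) w) w q = D2Phi e M (snd q) (snd w) (snd w)"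
proof -
  have "pderiv_dir (\<lambda>q. Phi e M (snd q)) w = (\<lambda>q. DPhi e M (snd q) (snd w))"
    by (rule ext) (rule pd1)
  thus ?thesis unfolding pderiv_dir_def using frechet_derivative_at[OF DPhi_deriv] by (metis pderiv_dir_def)
qed

lemma sum_Basis_prod_real:
  fixes f :: "('a::euclidean_space \<times> 'b::euclidean_space) \<Rightarrow> real"
  shows "sum f Basis = sum (\<lambda>i. f (i, 0)) Basis + sum (\<lambda>i. f (0, i)) Basis"
proof -
  have "inj_on (\<lambda>u. (u::'a, 0::'b)) Basis" "inj_on (\<lambda>u. (0::'a, u::'b)) Basis"
    by (auto intro!: inj_onI Pair_inject)
  thus ?thesis
    unfolding Basis_prod_def
    by (subst sum.union_disjoint) (auto simp: Basis_prod_def sum.reindex)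
qed

lemma D2_lin: "D2Phi e M y w w = (gg2 (e \<bullet> y) * (M - y \<bullet> y + (e \<bullet> y)^2) + 4 * gg1 (e \<bullet> y) * (e \<bullet> y) + 2 * gg (e \<bullet> y)) * ((e \<bullet> w) * (e \<bullet> w))
   + (- 4 * gg1 (e \<bullet> y)) * ((e \<bullet> w) * (y \<bullet> w)) + (- 2 * gg (e \<bullet> y)) * (w \<bullet> w)"
  unfolding D2Phi_def by (simp add: algebra_simps inner_commute)

lemma lap_Phi:
  fixes e :: "'b::euclidean_space"
  assumes "e \<bullet> e = 1"
  shows "laplacian (\<lambda>q::'a::euclidean_space \<times> 'b. Phi e M (snd q)) q
    = gg2 (e \<bullet> snd q) * (M - snd q \<bullet> snd q + (e \<bullet> snd q)^2) - 2 * (real DIM('b) - 1) * gg (e \<bullet> snd q)"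
proof -
  define y where "y = snd q"
  have "laplacian (\<lambda>q::'a \<times> 'b. Phi e M (snd q)) q = (\<Sum>w\<in>(Basis::('a\<times>'b) set). D2Phi e M y (snd w) (snd w))"
    unfolding laplacian_def pd2 y_def by simp
  also have "\<dots> = (\<Sum>w\<in>(Basis::'b set). D2Phi e M y w w)"
    by (simp add: sum_Basis_prod_real D2Phi_def mult_ac)
  also have "\<dots> = (gg2 (e \<bullet> y) * (M - y \<bullet> y + (e \<bullet> y)^2) + 4 * gg1 (e \<bullet> y) * (e \<bullet> y) + 2 * gg (e \<bullet> y)) * (\<Sum>w\<in>Basis. (e \<bullet> w) * (e \<bullet> w))
     + (- 4 * gg1 (e \<bullet> y)) * (\<Sum>w\<in>Basis. (e \<bullet> w) * (y \<bullet> w)) + (- 2 * gg (e \<bullet> y)) * (\<Sum>w\<in>(Basis::'b set). w \<bullet> w)"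
    unfolding D2_lin by (simp add: sum.distrib sum_distrib_left sum_subtractf sum_negf)
  also have "\<dots> = (gg2 (e \<bullet> y) * (M - y \<bullet> y + (e \<bullet> y)^2) + 4 * gg1 (e \<bullet> y) * (e \<bullet> y) + 2 * gg (e \<bullet> y)) * (e \<bullet> e)
     + (- 4 * gg1 (e \<bullet> y)) * (e \<bullet> y) + (- 2 * gg (e \<bullet> y)) * real DIM('b)"
    by (simp add: euclidean_inner[of e e, symmetric] euclidean_inner[of e y, symmetric])
  also have "\<dots> = gg2 (e \<bullet> y) * (M - y \<bullet> y + (e \<bullet> y)^2) - 2 * (real DIM('b) - 1) * gg (e \<bullet> y)"
    using assms by (simp add: algebra_simps)
  finally show ?thesis unfolding y_def .
qed

lemma Q_pos: assumes "0 \<le> t" "t \<le> 8" shows "gg2 t - 1/2 * t * gg1 t + gg t \<ge> 4"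
proof -
  have "gg2 t - 1/2 * t * gg1 t + gg t = 1/2 * t^3 - 8 * t + 17"
    by (simp add: gg_def gg1_def gg2_def algebra_simps power3_eq_cube)
  moreover have "0 \<le> (t - 23/10)^2 * (t + 46/10)" using assms by simp
  moreover have "(t - 23/10)^2 * (t + 46/10) = t^3 - 1587/100 * t + 24334/1000"
    by (simp add: power2_eq_square power3_eq_cube field_simps)
  ultimately show ?thesis using assms by linarith
qed

lemma gg_bounds: assumes "1/2 < t" "t < 8" shows "0 < gg t" "gg t \<le> 512"
proof -
  show "0 < gg t" using assms by (simp add: gg_def)
  have "t * (t - 1/2) \<le> 8 * 8" using assms by (intro mult_mono) auto
  hence "t * (t - 1/2) * (8 - t) \<le> (8 * 8) * 8" using assms by (intro mult_mono) auto
  thus "gg t \<le> 512" by (simp add: gg_def)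
qed

lemma L_Phi_pos:
  fixes e :: "'b::euclidean_space" and q :: "'a::euclidean_space \<times> 'b"
  assumes e1: "e \<bullet> e = 1"
    and M: "M = 400 * real DIM('b)"
    and t: "1/2 < e \<bullet> snd q" "e \<bullet> snd q < 8"
    and r: "snd q \<bullet> snd q - (e \<bullet> snd q)^2 < M"
  shows "laplacian (\<lambda>q::'a \<times> 'b. Phi e M (snd q)) q
     - 1/2 * frechet_derivative (\<lambda>q::'a \<times> 'b. Phi e M (snd q)) (at q) q
     + Phi e M (snd q) > 0"
proof -
  define y where "y = snd q"
  define t where "t = e \<bullet> y"
  define \<rho> where "\<rho> = y \<bullet> y - t^2"
  define d where "d = real DIM('b)"
  define F where "F = M - \<rho>"
  define Q where "Q = gg2 t - 1/2 * t * gg1 t + gg t"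
  have rho0: "\<rho> \<ge> 0" using Cauchy_Schwarz_ineq[of e y] e1 by (simp add: \<rho>_def t_def)
  have d1: "d \<ge> 1" by (simp add: d_def DIM_positive Suc_le_eq)
  have F0: "F > 0" using r by (simp add: F_def \<rho>_def t_def y_def)
  have Q4: "Q \<ge> 4" unfolding Q_def by (rule Q_pos) (use t in \<open>auto simp: t_def y_def\<close>)
  have g: "0 < gg t" "gg t \<le> 512" using gg_bounds[of t] t by (auto simp: t_def y_def)
  have "laplacian (\<lambda>q::'a \<times> 'b. Phi e M (snd q)) q
     - 1/2 * frechet_derivative (\<lambda>q::'a \<times> 'b. Phi e M (snd q)) (at q) q
     + Phi e M (snd q) = F * Q + gg t * (\<rho> - 2 * (d - 1))"
    unfolding lap_Phi[OF e1] fd1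
    by (simp add: DPhi_def Phi_def F_def Q_def \<rho>_def d_def t_def y_def algebra_simps power2_eq_square)
  also have "\<dots> > 0"
  proof (cases "\<rho> \<ge> 2 * (d - 1)")
    case True
    have "F * Q > 0" using F0 Q4 by simp
    moreover have "gg t * (\<rho> - 2 * (d - 1)) \<ge> 0" using True g by simp
    ultimately show ?thesis by linarith
  next
    case False
    have "F \<ge> 398 * d" using False M d1 by (simp add: F_def d_def)
    hence "F * Q \<ge> 398 * d * 4" using Q4 d1 by (intro mult_mono) auto
    moreover have "gg t * (2 * (d - 1)) \<le> 512 * (2 * d)" using g d1 by (intro mult_mono) auto
    moreover have "gg t * \<rho> \<ge> 0" using g rho0 by simp
    ultimately show ?thesis using d1 by (simp add: algebra_simps)
  qed
  finally show ?thesis .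
qed




lemma fd_lin:
  fixes f g :: "'c::euclidean_space \<Rightarrow> real"
  assumes "f differentiable at p" "g differentiable at p"
  shows "frechet_derivative (\<lambda>q. f q - c * g q) (at p) w
       = frechet_derivative f (at p) w - c * frechet_derivative g (at p) w"
proof -
  have "((\<lambda>q. f q - c * g q) has_derivative
      (\<lambda>w. frechet_derivative f (at p) w - c * frechet_derivative g (at p) w)) (at p)"
    using assms by (auto intro!: derivative_eq_intros simp: frechet_derivative_works[symmetric])
  from frechet_derivative_at[OF this] show ?thesis by metis
qed

lemma diff_lin:
  fixes f g :: "'c::euclidean_space \<Rightarrow> real"
  assumes "f differentiable at p" "g differentiable at p"
  shows "(\<lambda>q. f q - c * g q) differentiable at p"
  using assms unfolding differentiable_def by (auto intro!: derivative_eq_intros)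

theorem proposition4p2:
  fixes v :: "'b::euclidean_space"
  assumes "DIM('a::euclidean_space) \<ge> 2"
    and "v \<noteq> 0"
  shows "\<not> stable_region {(x, y). x \<in> sphere (0::'a) (cyl_rad TYPE('a)) \<and> v \<bullet> y > 0}"
proof
  define R where "R = cyl_rad TYPE('a)"
  define \<Omega> where "\<Omega> = {(x, y). x \<in> sphere (0::'a) R \<and> v \<bullet> y > 0}"
  assume "stable_region {(x, y). x \<in> sphere (0::'a) (cyl_rad TYPE('a)) \<and> v \<bullet> y > 0}"
  then obtain u where C2: "C2_on (cyl_cone \<Omega>) (hom_ext u)"
    and upos: "\<And>p. p \<in> \<Omega> \<Longrightarrow> u p > 0" and Lu: "\<And>p. p \<in> \<Omega> \<Longrightarrow> stab_op u p = 0"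
    unfolding stable_region_def \<Omega>_def R_def by blast
  define U where "U = hom_ext u"
  have R2: "R^2 = 2 * (real DIM('a) - 1)" using assms(1) by (simp add: R_def cyl_rad_def)
  have Rpos: "R > 0" using assms(1) by (simp add: R_def cyl_rad_def)
  have Asq: "cyl_Asq TYPE('a) = 1/2"
    using assms(1) unfolding cyl_Asq_def R2[unfolded R_def] by (simp add: field_simps)
  define e where "e = v /\<^sub>R norm v"
  have e1: "e \<bullet> e = 1" using assms(2) by (simp add: e_def inner_commute power2_norm_eq_inner[symmetric] field_simps)
  have ev: "v \<bullet> y > 0 \<longleftrightarrow> e \<bullet> y > 0" for y
    using assms(2) by (simp add: e_def zero_less_mult_iff)
  define M where "M = 400 * real DIM('b)"
  define ins where "ins = (\<lambda>y::'b. 1/2 < e \<bullet> y \<and> e \<bullet> y < 8 \<and> y \<bullet> y - (e \<bullet> y)^2 < M)"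
  define Phit where "Phit = (\<lambda>y::'b. if ins y then Phi e M y else 0)"
  define Y where "Y = {y::'b. 1/2 \<le> e \<bullet> y \<and> e \<bullet> y \<le> 8 \<and> y \<bullet> y - (e \<bullet> y)^2 \<le> M}"
  define K where "K = sphere (0::'a) R \<times> Y"
  have hom_on: "U (x, y) = u (x, y)" if "norm x = R" for x y
    using that Rpos by (simp add: U_def hom_ext_def R_def[symmetric])
  have Om_cone: "\<Omega> \<subseteq> cyl_cone \<Omega>"
  proof
    fix q assume q: "q \<in> \<Omega>"
    obtain x y where xy: "q = (x, y)" by force
    have nx: "norm x = R" using q xy by (simp add: \<Omega>_def)
    hence "x \<noteq> 0" using Rpos by auto
    thus "q \<in> cyl_cone \<Omega>" using q xy nx Rpos by (simp add: cyl_cone_def R_def)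
  qed
  have KO: "K \<subseteq> \<Omega>" using ev by (auto simp: K_def Y_def \<Omega>_def)
  have Ucont: "continuous_on (cyl_cone \<Omega>) U"
    using C2 by (simp add: C2_on_def U_def differentiable_imp_continuous_on)
  have Yc: "compact Y"
  proof -
    have "closed Y" unfolding Y_def
      by (intro closed_Collect_conj closed_Collect_le continuous_intros)
    moreover have "bounded Y"
    proof -
      have "norm y \<le> sqrt (M + 64)" if "y \<in> Y" for y
      proof -
        have "(e \<bullet> y)^2 \<le> 8^2" using that by (intro power_mono) (auto simp: Y_def)
        hence "y \<bullet> y \<le> M + 64" using that by (simp add: Y_def)
        thus ?thesis by (simp add: norm_eq_sqrt_inner)
      qed
      thus ?thesis unfolding bounded_iff by blast
    qed
    ultimately show ?thesis by (simp add: compact_eq_bounded_closed)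
  qed
  have Kc: "compact K" unfolding K_def by (intro compact_Times Yc compact_sphere)
  obtain a0 :: 'a where a0: "a0 \<in> Basis" by (meson all_not_in_conv nonempty_Basis)
  define q0 where "q0 = (R *\<^sub>R a0, 4 *\<^sub>R e)"
  have q0K: "q0 \<in> K" using e1 Rpos a0 by (simp add: q0_def K_def Y_def M_def power2_eq_square)
  have q0ins: "ins (snd q0)" using e1 by (simp add: q0_def ins_def M_def power2_eq_square)
  have Phi_q0: "Phi e M (snd q0) > 0"
    using e1 by (simp add: q0_def Phi_def gg_def M_def power2_eq_square)
  have Upos: "U q > 0" if "q \<in> K" for q
  proof -
    obtain x y where xy: "q = (x, y)" by force
    have qO: "q \<in> \<Omega>" using KO that by blast
    have "norm x = R" using that xy by (simp add: K_def)
    thus ?thesis using hom_on upos[OF qO] xy by simp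
  qed
  have rcont: "continuous_on K (\<lambda>q. Phi e M (snd q) / U q)"
  proof (intro continuous_intros)
    show "continuous_on K U" using Ucont KO Om_cone continuous_on_subset by blast
    show "continuous_on K (\<lambda>q. Phi e M (snd q))"
      unfolding Phi_def gg_def by (intro continuous_intros)
  qed (use Upos in force)
  obtain p where pK: "p \<in> K" and pmax: "\<And>q. q \<in> K \<Longrightarrow> Phi e M (snd q) / U q \<le> Phi e M (snd p) / U p"
    using continuous_attains_sup[OF Kc _ rcont] q0K by blast
  define c where "c = Phi e M (snd p) / U p"
  have cpos: "c > 0"
  proof -
    have "0 < Phi e M (snd q0) / U q0" using Phi_q0 Upos q0K by simp
    thus ?thesis using pmax[OF q0K] by (simp add: c_def)
  qed
  have Phip: "Phi e M (snd p) = c * U p" using Upos[OF pK] by (simp add: c_def)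
  have pO: "p \<in> \<Omega>" using KO pK by blast
  obtain px py where pxy: "p = (px, py)" by force
  have npx: "norm px = R" using pK pxy by (simp add: K_def)
  have insp: "ins py"
  proof -
    have pY: "py \<in> Y" using pK pxy by (simp add: K_def)
    have "Phi e M py > 0" using Phip cpos Upos[OF pK] pxy by simp
    hence "gg (e \<bullet> py) \<noteq> 0" "M - py \<bullet> py + (e \<bullet> py)^2 \<noteq> 0" by (auto simp: Phi_def)
    hence "e \<bullet> py \<noteq> 1/2" "e \<bullet> py \<noteq> 8" "py \<bullet> py - (e \<bullet> py)^2 \<noteq> M" by (auto simp: gg_def)
    thus ?thesis using pY by (auto simp: ins_def Y_def)
  qed
  have bound: "Phit (snd q) \<le> c * u q" if "q \<in> \<Omega>" for q
  proof (cases "ins (snd q)")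
    case True
    obtain x y where xy: "q = (x, y)" by force
    have nx: "norm x = R" using that xy by (simp add: \<Omega>_def)
    have qK: "q \<in> K" using True that xy by (auto simp: K_def ins_def Y_def \<Omega>_def)
    have "Phi e M y / U q \<le> c" using pmax[OF qK] xy by (simp add: c_def)
    hence "Phi e M y \<le> c * U q" using Upos[OF qK] by (simp add: divide_le_eq mult.commute)
    thus ?thesis using True xy hom_on[OF nx] by (simp add: Phit_def)
  next
    case False
    thus ?thesis using cpos upos[OF that] by (simp add: Phit_def)
  qed
  define W where "W = {q::'a \<times> 'b. fst q \<noteq> 0 \<and> ins (snd q)}"
  have Wopen: "open W"
    unfolding W_def ins_def
    by (intro open_Collect_conj open_Collect_neq open_Collect_less continuous_intros)
  have WC: "W \<subseteq> cyl_cone \<Omega>"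
  proof
    fix q assume q: "q \<in> W"
    obtain x y where xy: "q = (x, y)" by force
    have "x \<noteq> 0" "ins y" using q xy by (auto simp: W_def)
    moreover have "v \<bullet> y > 0" using ev \<open>ins y\<close> by (simp add: ins_def)
    ultimately show "q \<in> cyl_cone \<Omega>" using xy Rpos by (simp add: cyl_cone_def \<Omega>_def R_def[symmetric])
  qed
  have pW: "p \<in> W" using pxy npx Rpos insp by (auto simp: W_def)
  define \<Psi> where "\<Psi> = (\<lambda>q::'a \<times> 'b. Phi e M (snd q))"
  define h where "h = (\<lambda>q. \<Psi> q - c * U q)"
  have hmax: "\<forall>q\<in>W. h q \<le> h p"
  proof
    fix q assume q: "q \<in> W"
    obtain x y where xy: "q = (x, y)" by force
    define q' where "q' = (R *\<^sub>R (x /\<^sub>R norm x), y)"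
    have qC: "q \<in> cyl_cone \<Omega>" using WC q by blast
    have q'O: "q' \<in> \<Omega>" using qC xy by (simp add: cyl_cone_def q'_def R_def)
    have Uq: "U q = u q'" by (simp add: U_def hom_ext_def xy q'_def R_def)
    have "ins y" using q xy by (simp add: W_def)
    hence "\<Psi> q = Phit (snd q')" by (simp add: \<Psi>_def Phit_def xy q'_def)
    also have "\<dots> \<le> c * u q'" by (rule bound[OF q'O])
    finally have "h q \<le> 0" by (simp add: h_def Uq)
    moreover have "h p = 0" using Phip by (simp add: h_def \<Psi>_def)
    ultimately show "h q \<le> h p" by simp
  qed
  have Udiff: "U differentiable at q" if "q \<in> W" for q
    using C2 WC that Wopen differentiable_on_subset differentiable_on_eq_differentiable_at
    unfolding C2_on_def U_def by metis
  have Ubdiff: "pderiv_dir U b differentiable at q" if "q \<in> W" "b \<in> Basis" for q b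
    using C2 WC that Wopen differentiable_on_subset differentiable_on_eq_differentiable_at
    unfolding C2_on_def U_def by metis
  have Psidiff: "\<Psi> differentiable at q" for q
    unfolding \<Psi>_def differentiable_def using Phi_deriv by blast
  have Psibdiff: "pderiv_dir \<Psi> b differentiable at q" for q b
  proof -
    have "pderiv_dir \<Psi> b = (\<lambda>q. DPhi e M (snd q) (snd b))" unfolding \<Psi>_def by (rule ext) (rule pd1)
    thus ?thesis unfolding differentiable_def using DPhi_deriv by metis
  qed
  have hdiff: "\<forall>q\<in>W. h differentiable at q"
    unfolding h_def using Udiff Psidiff diff_lin by blast
  have second: "pderiv_dir (pderiv_dir \<Psi> b) b p - c * pderiv_dir (pderiv_dir U b) b p \<le> 0"
    if b: "b \<in> Basis" for b
  proof -
    define G where "G = (\<lambda>q. pderiv_dir \<Psi> b q - c * pderiv_dir U b q)"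
    have eqW: "pderiv_dir h b q = G q" if "q \<in> W" for q
      unfolding pderiv_dir_def h_def G_def
      by (rule fd_lin) (use Psidiff Udiff that in auto)
    have Gd: "G differentiable at p" unfolding G_def
      by (rule diff_lin) (use Psibdiff Ubdiff pW b in auto)
    have hbd: "pderiv_dir h b differentiable at p"
    proof -
      from Gd obtain D where "(G has_derivative D) (at p)" unfolding differentiable_def by blast
      hence "(pderiv_dir h b has_derivative D) (at p)"
        by (rule has_derivative_transform_within_open[OF _ Wopen pW]) (use eqW in auto)
      thus ?thesis unfolding differentiable_def by blast
    qed
    have "pderiv_dir (pderiv_dir h b) b p \<le> 0"
      by (rule max_second[OF Wopen pW hmax hdiff hbd])
    moreover have "pderiv_dir (pderiv_dir h b) b p = frechet_derivative G (at p) b"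
      unfolding pderiv_dir_def[of "pderiv_dir h b"]
      using frechet_derivative_transform_within_open[OF hbd Wopen pW eqW] by simp
    moreover have "frechet_derivative G (at p) b = pderiv_dir (pderiv_dir \<Psi> b) b p - c * pderiv_dir (pderiv_dir U b) b p"
      unfolding G_def pderiv_dir_def[of "pderiv_dir \<Psi> b"] pderiv_dir_def[of "pderiv_dir U b"]
      by (rule fd_lin) (use Psibdiff Ubdiff pW b in auto)
    ultimately show ?thesis by simp
  qed
  have lapineq: "laplacian \<Psi> p - c * laplacian U p \<le> 0"
  proof -
    have "laplacian \<Psi> p - c * laplacian U p
        = (\<Sum>b\<in>Basis. pderiv_dir (pderiv_dir \<Psi> b) b p - c * pderiv_dir (pderiv_dir U b) b p)"
      unfolding laplacian_def by (simp add: sum_subtractf sum_distrib_left)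
    also have "\<dots> \<le> 0" by (rule sum_nonpos) (use second in auto)
    finally show ?thesis .
  qed
  have first: "frechet_derivative \<Psi> (at p) p - c * frechet_derivative U (at p) p = 0"
  proof -
    have hd: "(h has_derivative frechet_derivative h (at p)) (at p)"
      using hdiff pW frechet_derivative_works by blast
    have "frechet_derivative h (at p) = (\<lambda>v. 0)"
      by (rule differential_zero_maxmin[OF pW Wopen hd]) (use hmax in auto)
    moreover have "frechet_derivative h (at p) p = frechet_derivative \<Psi> (at p) p - c * frechet_derivative U (at p) p"
      unfolding h_def by (rule fd_lin) (use Psidiff Udiff pW in auto)
    ultimately show ?thesis by simp
  qed
  have Lup: "laplacian U p - 1/2 * frechet_derivative U (at p) p + u p = 0"
    using Lu[OF pO] Asq by (simp add: stab_op_def U_def)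
  have Up: "U p = u p" using hom_on[OF npx] pxy by simp
  have pos: "laplacian \<Psi> p - 1/2 * frechet_derivative \<Psi> (at p) p + \<Psi> p > 0"
    unfolding \<Psi>_def
    by (rule L_Phi_pos[OF e1 M_def]) (use insp pxy in \<open>auto simp: ins_def\<close>)
  have "c * (laplacian U p - 1/2 * frechet_derivative U (at p) p + u p) = 0" using Lup by simp
  hence "c * laplacian U p - 1/2 * (c * frechet_derivative U (at p) p) + c * u p = 0"
    by (simp add: algebra_simps)
  moreover have "\<Psi> p = c * u p" using Phip Up by (simp add: \<Psi>_def)
  ultimately show False using pos lapineq first by linarith
qed

end
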